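(* Let $(\mathcal{S},\mathcal{A},\tau,\mu_0,\gamma)$ be fixed, and let $\pi$ be any fixed policy. For reward functions $R, R' : \mathcal{S}\times\mathcal{A}\times\mathcal{S}\to\mathbb{R}$, let $Q^\pi_R$ and $Q^\pi_{R'}$ be the $Q$-functions of $\pi$ in the MDPs $(\mathcal{S},\mathcal{A},\tau,\mu_0,R,\gamma)$ and $(\mathcal{S},\mathcal{A},\tau,\mu_0,R',\gamma)$. Then $Q^\pi_R = Q^\pi_{R'}$ if and only if $R'$ is produced from $R$ by $S'$-redistribution. Likewise, the optimal $Q$-functions satisfy $Q^\star_R = Q^\star_{R'}$ if and only if $R'$ is produced from $R$ by $S'$-redistribution.
   Context: An MDP is a tuple $(\mathcal{S},\mathcal{A},\tau,\mu_0,R,\gamma)$ with finite state set $\mathcal{S}$, finite action set $\mathcal{A}$, transition dynamics $\tau:\mathcal{S}\times\mathcal{A}\to\Delta(\mathcal{S})$, initial state distribution $\mu_0\in\Delta(\mathcal{S})$, deterministic reward function $R:\mathcal{S}\times\mathcal{A}\times\mathcal{S}\to\mathbb{R}$, and discount $\gamma\in(0,1)$. A policy is a map $\pi:\mathcal{S}\to\Delta(\mathcal{A})$. The return of a trajectory $(s_0,a_0,s_1,a_1,\dots)$ is $\sum_{t\ge 0}\gamma^t R(s_t,a_t,s_{t+1})$. The value function is $V^\pi(s)=\mathbb{E}[\text{return}]$ of the trajectory started at $s$ with actions drawn from $\pi$ and next states from $\tau$; the $Q$-function $Q^\pi(s,a)$ is the same expectation conditioned on the first action being $a$; equivalently $Q^\pi$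 is the unique solution of $Q^\pi(s,a)=\mathbb{E}_{S'\sim\tau(s,a)}[R(s,a,S')+\gamma V^\pi(S')]$, $V^\pi(s)=\mathbb{E}_{A\sim\pi(s)}[Q^\pi(s,A)]$. The policy evaluation function is $\mathcal{J}(\pi)=\mathbb{E}_{S_0\sim\mu_0}[V^\pi(S_0)]$; an optimal policy maximises $\mathcal{J}$, and $Q^\star$ denotes the (unique) $Q$-function of an optimal policy. Given $\tau$, $R'$ is produced from $R$ by $S'$-redistribution if $\mathbb{E}_{S'\sim\tau(s,a)}[R(s,a,S')]=\mathbb{E}_{S'\sim\tau(s,a)}[R'(s,a,S')]$ for all $s\in\mathcal{S}$, $a\in\mathcal{A}$. *)

theory Defs
  imports "HOL-Probability.Probability"
begin

definition bellman_eval ::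
  "('s \<Rightarrow> 'a \<Rightarrow> 's pmf) \<Rightarrow> ('s \<Rightarrow> 'a \<Rightarrow> 's \<Rightarrow> real) \<Rightarrow> real \<Rightarrow> ('s \<Rightarrow> 'a pmf)
    \<Rightarrow> ('s \<Rightarrow> 'a \<Rightarrow> real) \<Rightarrow> bool" where
  "bellman_eval tau R \<gamma> \<pi> Q \<longleftrightarrow>
     (\<forall>s a. Q s a = measure_pmf.expectation (tau s a)
        (\<lambda>s'. R s a s' + \<gamma> * measure_pmf.expectation (\<pi> s') (\<lambda>a'. Q s' a')))"

definition Qpi ::
  "('s \<Rightarrow> 'a \<Rightarrow> 's pmf) \<Rightarrow> ('s \<Rightarrow> 'a \<Rightarrow> 's \<Rightarrow> real) \<Rightarrow> real \<Rightarrow> ('s \<Rightarrow> 'a pmf)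
    \<Rightarrow> 's \<Rightarrow> 'a \<Rightarrow> real" where
  "Qpi tau R \<gamma> \<pi> = (THE Q. bellman_eval tau R \<gamma> \<pi> Q)"

definition bellman_opt ::
  "('s \<Rightarrow> 'a::finite \<Rightarrow> 's pmf) \<Rightarrow> ('s \<Rightarrow> 'a \<Rightarrow> 's \<Rightarrow> real) \<Rightarrow> real
    \<Rightarrow> ('s \<Rightarrow> 'a \<Rightarrow> real) \<Rightarrow> bool" where
  "bellman_opt tau R \<gamma> Q \<longleftrightarrow>
     (\<forall>s a. Q s a = measure_pmf.expectation (tau s a)
        (\<lambda>s'. R s a s' + \<gamma> * Max (range (Q s'))))"

text \<open>Q*: the unique solution of the Bellman optimality equation
  (the Q-function of an optimal policy).\<close>
definition Qstar ::
  "('s \<Rightarrow> 'a::finite \<Rightarrow> 's pmf) \<Rightarrow> ('s \<Rightarrow> 'a \<Rightarrow> 's \<Rightarrow> real) \<Rightarrow> real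
    \<Rightarrow> 's \<Rightarrow> 'a \<Rightarrow> real" where
  "Qstar tau R \<gamma> = (THE Q. bellman_opt tau R \<gamma> Q)"

definition S'_redistribution ::
  "('s \<Rightarrow> 'a \<Rightarrow> 's pmf) \<Rightarrow> ('s \<Rightarrow> 'a \<Rightarrow> 's \<Rightarrow> real) \<Rightarrow> ('s \<Rightarrow> 'a \<Rightarrow> 's \<Rightarrow> real) \<Rightarrow> bool" where
  "S'_redistribution tau R R' \<longleftrightarrow>
     (\<forall>s a. measure_pmf.expectation (tau s a) (\<lambda>s'. R s a s')
          = measure_pmf.expectation (tau s a) (\<lambda>s'. R' s a s'))"

end

theory Submission
  imports Defs "HOL-Analysis.Analysis"
begin

lemma contraction_fix:
  fixes T :: "('i::finite \<Rightarrow> real) \<Rightarrow> 'i \<Rightarrow> real"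
  assumes c: "0 \<le> c" "c < 1"
    and con: "\<And>f g x. \<bar>T f x - T g x\<bar> \<le> c * Max (range (\<lambda>y. \<bar>f y - g y\<bar>))"
  shows "\<exists>!f. T f = f"
proof -
  have fs: "Met_TC.fspace (UNIV::'i set) = (UNIV :: ('i \<Rightarrow> real) set)"
    by (auto simp: Met_TC.fspace_def finite_imp_bounded)
  have fd: "Met_TC.fdist (UNIV::'i set) f g = Max (range (\<lambda>y. \<bar>f y - g y\<bar>))" for f g :: "'i \<Rightarrow> real"
    by (simp add: Met_TC.fdist_def fs cSup_eq_Max dist_real_def)
  have ms: "Metric_space (Met_TC.fspace (UNIV::'i set)) (Met_TC.fdist (UNIV::'i set) :: ('i \<Rightarrow> real) \<Rightarrow> _)"
    by (rule Met_TC.Metric_space_funspace)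
  interpret F: Metric_space "UNIV :: ('i \<Rightarrow> real) set" "Met_TC.fdist (UNIV::'i set)"
    using ms fs by simp
  have "mcomplete_of (funspace (UNIV::'i set) (Met_TC.Self :: real metric))"
    by (rule Met_TC.mcomplete_funspace) (simp add: complete_UNIV)
  then have mc: "F.mcomplete"
    by (simp add: mcomplete_of_def funspace_def Met_TC.Self_def fs ms[simplified fs]
      Metric_space.mspace_metric Metric_space.mdist_metric)
  obtain f where "T f = f"
    using F.Banach_fixedpoint_thm[OF mc, of T c] c
    by (auto simp: fd Max_le_iff con)
  moreover have "g = f" if "T g = g" "T f = f" for f g
  proof -
    let ?m = "Max (range (\<lambda>y. \<bar>f y - g y\<bar>))"
    have "\<bar>f x - g x\<bar> \<le> c * ?m" for x
      using con[where f=f and g=g and x=x] that by simp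
    then have "?m \<le> c * ?m" by (simp add: Max_le_iff)
    moreover have "0 \<le> ?m" by (simp add: Max_ge_iff)
    ultimately have "?m \<le> 0" using c
      by (smt (verit) mult_le_cancel_right1)
    then show ?thesis by (auto simp: Max_le_iff)
  qed
  ultimately show ?thesis by blast
qed


lemma contraction_fix2:
  fixes T :: "('s::finite \<Rightarrow> 'a::finite \<Rightarrow> real) \<Rightarrow> 's \<Rightarrow> 'a \<Rightarrow> real"
  assumes c: "0 \<le> c" "c < 1"
    and con: "\<And>f g M s a. (\<And>s a. \<bar>f s a - g s a\<bar> \<le> M) \<Longrightarrow> \<bar>T f s a - T g s a\<bar> \<le> c * M"
  shows "\<exists>!f. T f = f"
proof -
  define T' where "T' q = case_prod (T (curry q))" for q :: "'s \<times> 'a \<Rightarrow> real"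
  have "\<exists>!q. T' q = q"
  proof (rule contraction_fix[OF c])
    fix f g :: "'s \<times> 'a \<Rightarrow> real" and x :: "'s \<times> 'a"
    obtain s a where x: "x = (s,a)" by fastforce
    have "\<bar>T (curry f) s a - T (curry g) s a\<bar> \<le> c * Max (range (\<lambda>y. \<bar>f y - g y\<bar>))"
      by (rule con) (simp add: Max_ge_iff)
    then show "\<bar>T' f x - T' g x\<bar> \<le> c * Max (range (\<lambda>y. \<bar>f y - g y\<bar>))"
      by (simp add: T'_def x)
  qed
  then obtain q where q: "T' q = q" and qu: "\<And>q'. T' q' = q' \<Longrightarrow> q' = q" by blast
  show ?thesis
  proof
    show "T (curry q) = curry q"
      using q by (metis T'_def curry_case_prod)
  next
    fix f assume "T f = f"
    then have "T' (case_prod f) = case_prod f" by (simp add: T'_def)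
    then have "case_prod f = q" by (rule qu)
    then show "f = curry q" by auto
  qed
qed

lemma pmf_exp_bound:
  fixes p :: "'x::finite pmf" and f :: "'x \<Rightarrow> real"
  assumes "\<And>x. \<bar>f x\<bar> \<le> M"
  shows "\<bar>measure_pmf.expectation p f\<bar> \<le> M"
proof -
  have "\<bar>measure_pmf.expectation p f\<bar> \<le> measure_pmf.expectation p (\<lambda>x. \<bar>f x\<bar>)"
    using integral_norm_bound[of "measure_pmf p" f] by simp
  also have "\<dots> \<le> measure_pmf.expectation p (\<lambda>x. M)"
    by (rule integral_mono) (auto simp: integrable_measure_pmf_finite assms)
  also have "\<dots> = M" by simp
  finally show ?thesis .
qed

lemma pmf_exp_lin:
  fixes p :: "'x::finite pmf" and f g :: "'x \<Rightarrow> real"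
  shows "measure_pmf.expectation p (\<lambda>x. f x + c * g x) = measure_pmf.expectation p f + c * measure_pmf.expectation p g"
  by (subst Bochner_Integration.integral_add) (auto simp: integrable_measure_pmf_finite)

lemma pmf_exp_diff:
  fixes p :: "'x::finite pmf" and f g :: "'x \<Rightarrow> real"
  shows "measure_pmf.expectation p (\<lambda>x. f x - g x) = measure_pmf.expectation p f - measure_pmf.expectation p g"
  by (subst Bochner_Integration.integral_diff) (auto simp: integrable_measure_pmf_finite)

lemma Max_diff_bound:
  fixes f g :: "'a::finite \<Rightarrow> real"
  assumes "\<And>a. \<bar>f a - g a\<bar> \<le> M"
  shows "\<bar>Max (range f) - Max (range g)\<bar> \<le> M"
proof -
  obtain a where a: "Max (range f) = f a"
  proof -
    have "Max (range f) \<in> range f" by (rule Max_in) auto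
    then show ?thesis using that by blast
  qed
  obtain b where b: "Max (range g) = g b"
  proof -
    have "Max (range g) \<in> range g" by (rule Max_in) auto
    then show ?thesis using that by blast
  qed
  have "g a \<le> Max (range g)" "f b \<le> Max (range f)" by auto
  then show ?thesis using assms[of a] assms[of b] a b by linarith
qed


lemma be_iff:
  fixes tau :: "'s::finite \<Rightarrow> 'a::finite \<Rightarrow> 's pmf"
  shows "bellman_eval tau R \<gamma> \<pi> Q \<longleftrightarrow> (\<forall>s a. Q s a = measure_pmf.expectation (tau s a) (R s a)
     + \<gamma> * measure_pmf.expectation (tau s a) (\<lambda>s'. measure_pmf.expectation (\<pi> s') (Q s')))"
  unfolding bellman_eval_def by (simp add: pmf_exp_lin)

lemma bo_iff:
  fixes tau :: "'s::finite \<Rightarrow> 'a::finite \<Rightarrow> 's pmf"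
  shows "bellman_opt tau R \<gamma> Q \<longleftrightarrow> (\<forall>s a. Q s a = measure_pmf.expectation (tau s a) (R s a)
     + \<gamma> * measure_pmf.expectation (tau s a) (\<lambda>s'. Max (range (Q s'))))"
  unfolding bellman_opt_def by (simp add: pmf_exp_lin)

lemma fix_iff: "(T Q = Q) \<longleftrightarrow> (\<forall>s a. Q s a = T Q s a)"
  by (auto simp: fun_eq_iff)

lemma ex_eval:
  fixes tau :: "'s::finite \<Rightarrow> 'a::finite \<Rightarrow> 's pmf"
  assumes "0 \<le> \<gamma>" "\<gamma> < 1"
  shows "\<exists>!Q. bellman_eval tau R \<gamma> \<pi> Q"
proof -
  define T where "T Q s a = measure_pmf.expectation (tau s a) (R s a)
     + \<gamma> * measure_pmf.expectation (tau s a) (\<lambda>s'. measure_pmf.expectation (\<pi> s') (Q s'))"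
    for Q :: "'s \<Rightarrow> 'a \<Rightarrow> real" and s a
  have "\<exists>!Q. T Q = Q"
  proof (rule contraction_fix2[OF assms])
    fix f g :: "'s \<Rightarrow> 'a \<Rightarrow> real" and M s a
    assume b: "\<And>s a. \<bar>f s a - g s a\<bar> \<le> M"
    have "\<bar>measure_pmf.expectation (tau s a) (\<lambda>s'. measure_pmf.expectation (\<pi> s') (f s'))
       - measure_pmf.expectation (tau s a) (\<lambda>s'. measure_pmf.expectation (\<pi> s') (g s'))\<bar> \<le> M"
    proof -
      have i: "\<bar>measure_pmf.expectation (\<pi> s') (\<lambda>a. f s' a - g s' a)\<bar> \<le> M" for s'
        by (rule pmf_exp_bound) (rule b)
      have "\<bar>measure_pmf.expectation (tau s a) (\<lambda>s'. measure_pmf.expectation (\<pi> s') (\<lambda>a. f s' a - g s' a))\<bar> \<le> M"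
        by (rule pmf_exp_bound) (rule i)
      then show ?thesis by (simp add: pmf_exp_diff)
    qed
    then show "\<bar>T f s a - T g s a\<bar> \<le> \<gamma> * M"
      unfolding T_def using assms
      by (simp add: right_diff_distrib[symmetric] abs_mult mult_left_mono)
  qed
  then show ?thesis unfolding be_iff fix_iff T_def .
qed

lemma ex_opt:
  fixes tau :: "'s::finite \<Rightarrow> 'a::finite \<Rightarrow> 's pmf"
  assumes "0 \<le> \<gamma>" "\<gamma> < 1"
  shows "\<exists>!Q. bellman_opt tau R \<gamma> Q"
proof -
  define T where "T Q s a = measure_pmf.expectation (tau s a) (R s a)
     + \<gamma> * measure_pmf.expectation (tau s a) (\<lambda>s'. Max (range (Q s')))"
    for Q :: "'s \<Rightarrow> 'a \<Rightarrow> real" and s a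
  have "\<exists>!Q. T Q = Q"
  proof (rule contraction_fix2[OF assms])
    fix f g :: "'s \<Rightarrow> 'a \<Rightarrow> real" and M s a
    assume b: "\<And>s a. \<bar>f s a - g s a\<bar> \<le> M"
    have "\<bar>measure_pmf.expectation (tau s a) (\<lambda>s'. Max (range (f s')))
       - measure_pmf.expectation (tau s a) (\<lambda>s'. Max (range (g s')))\<bar> \<le> M"
      unfolding pmf_exp_diff[symmetric]
      by (rule pmf_exp_bound, rule Max_diff_bound, rule b)
    then show "\<bar>T f s a - T g s a\<bar> \<le> \<gamma> * M"
      unfolding T_def using assms
      by (simp add: right_diff_distrib[symmetric] abs_mult mult_left_mono)
  qed
  then show ?thesis unfolding bo_iff fix_iff T_def .
qed

theorem theorem3p1:
  fixes tau :: "'s::finite \<Rightarrow> 'a::finite \<Rightarrow> 's pmf"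
    and \<pi> :: "'s \<Rightarrow> 'a pmf"
    and R R' :: "'s \<Rightarrow> 'a \<Rightarrow> 's \<Rightarrow> real"
    and \<gamma> :: real
  assumes "0 < \<gamma>" and "\<gamma> < 1"
  shows "(Qpi tau R \<gamma> \<pi> = Qpi tau R' \<gamma> \<pi> \<longleftrightarrow> S'_redistribution tau R R')
       \<and> (Qstar tau R \<gamma> = Qstar tau R' \<gamma> \<longleftrightarrow> S'_redistribution tau R R')"
proof -
  have g: "0 \<le> \<gamma>" "\<gamma> < 1" using assms by auto
  have red: "S'_redistribution tau R R' \<longleftrightarrow> (\<forall>s a. measure_pmf.expectation (tau s a) (R s a)
      = measure_pmf.expectation (tau s a) (R' s a))"
    unfolding S'_redistribution_def by simp
  have pe: "bellman_eval tau X \<gamma> \<pi> (Qpi tau X \<gamma> \<pi>)" for X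
    unfolding Qpi_def by (rule theI'[OF ex_eval[OF g, where tau=tau and R=X and \<pi>=\<pi>]])
  have po: "bellman_opt tau X \<gamma> (Qstar tau X \<gamma>)" for X
    unfolding Qstar_def by (rule theI'[OF ex_opt[OF g, where tau=tau and R=X]])
  have "Qpi tau R \<gamma> \<pi> = Qpi tau R' \<gamma> \<pi> \<longleftrightarrow> S'_redistribution tau R R'"
  proof
    assume eq: "Qpi tau R \<gamma> \<pi> = Qpi tau R' \<gamma> \<pi>"
    show "S'_redistribution tau R R'"
      unfolding red
    proof (intro allI)
      fix s a
      show "measure_pmf.expectation (tau s a) (R s a) = measure_pmf.expectation (tau s a) (R' s a)"
      proof -
        have h1: "Qpi tau R \<gamma> \<pi> s a = measure_pmf.expectation (tau s a) (R s a)
           + \<gamma> * measure_pmf.expectation (tau s a) (\<lambda>s'. measure_pmf.expectation (\<pi> s') (Qpi tau R \<gamma> \<pi> s'))"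
          using pe[of R] unfolding be_iff by blast
        have h2: "Qpi tau R \<gamma> \<pi> s a = measure_pmf.expectation (tau s a) (R' s a)
           + \<gamma> * measure_pmf.expectation (tau s a) (\<lambda>s'. measure_pmf.expectation (\<pi> s') (Qpi tau R \<gamma> \<pi> s'))"
          using pe[of R'] unfolding be_iff eq by blast
        show ?thesis using h1 h2 by linarith
      qed
    qed
  next
    assume "S'_redistribution tau R R'"
    then have "bellman_eval tau R \<gamma> \<pi> = bellman_eval tau R' \<gamma> \<pi>"
      unfolding red by (simp add: fun_eq_iff be_iff)
    then show "Qpi tau R \<gamma> \<pi> = Qpi tau R' \<gamma> \<pi>"
      unfolding Qpi_def by simp
  qed
  moreover have "Qstar tau R \<gamma> = Qstar tau R' \<gamma> \<longleftrightarrow> S'_redistribution tau R R'"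
  proof
    assume eq: "Qstar tau R \<gamma> = Qstar tau R' \<gamma>"
    show "S'_redistribution tau R R'"
      unfolding red
    proof (intro allI)
      fix s a
      show "measure_pmf.expectation (tau s a) (R s a) = measure_pmf.expectation (tau s a) (R' s a)"
      proof -
        have h1: "Qstar tau R \<gamma> s a = measure_pmf.expectation (tau s a) (R s a)
           + \<gamma> * measure_pmf.expectation (tau s a) (\<lambda>s'. Max (range (Qstar tau R \<gamma> s')))"
          using po[of R] unfolding bo_iff by blast
        have h2: "Qstar tau R \<gamma> s a = measure_pmf.expectation (tau s a) (R' s a)
           + \<gamma> * measure_pmf.expectation (tau s a) (\<lambda>s'. Max (range (Qstar tau R \<gamma> s')))"
          using po[of R'] unfolding bo_iff eq by blast
        show ?thesis using h1 h2 by linarith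
      qed
    qed
  next
    assume "S'_redistribution tau R R'"
    then have "bellman_opt tau R \<gamma> = bellman_opt tau R' \<gamma>"
      unfolding red by (simp add: fun_eq_iff bo_iff)
    then show "Qstar tau R \<gamma> = Qstar tau R' \<gamma>"
      unfolding Qstar_def by simp
  qed
  ultimately show ?thesis by blast
qed

end
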